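(* Let $n>1$ be a natural number which is either multiplicatively $e$-perfect (i.e. $T_e(n)=n^2$) or multiplicatively $e$-superperfect (i.e. $T_e(T_e(n))=n^2$). Then $n$ is $e$-harmonic of type $2$ if and only if $S_e(n)$ divides $d_e(n)$.
   Context: For $n=p_1^{a_1}\cdots p_r^{a_r}>1$ (prime factorization), a divisor $d=p_1^{b_1}\cdots p_r^{b_r}$ of $n$ is an exponential divisor ($e$-divisor) if $b_i\mid a_i$ for all $i$. $T_e(n)$ is the product of the $e$-divisors of $n$, $d_e(n)=d(a_1)\cdots d(a_r)$ is the number of $e$-divisors of $n$ (where $d(m)$ is the number of positive divisors of $m$), and $S_e(n)=\prod_{i=1}^r\left(\sum_{d_i\mid a_i}p_i^{a_i-d_i}\right)$. An integer $n$ is called $e$-harmonic of type $2$ if $S_e(n)\mid n\,d_e(n)$. *)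

theory Defs
  imports "HOL-Computational_Algebra.Primes"
begin

definition e_divisors :: "nat \<Rightarrow> nat set" where
  "e_divisors n = {d. d dvd n \<and>
      (\<forall>p\<in>prime_factors n. multiplicity p d dvd multiplicity p n)}"

definition T_e :: "nat \<Rightarrow> nat" where
  "T_e n = \<Prod>(e_divisors n)"

definition d_e :: "nat \<Rightarrow> nat" where
  "d_e n = (\<Prod>p\<in>prime_factors n. card {k. k dvd multiplicity p n})"

definition S_e :: "nat \<Rightarrow> nat" where
  "S_e n = (\<Prod>p\<in>prime_factors n.
      \<Sum>k\<in>{k. k dvd multiplicity p n}. p ^ (multiplicity p n - k))"

definition e_harmonic2 :: "nat \<Rightarrow> bool" where
  "e_harmonic2 n \<longleftrightarrow> S_e n dvd n * d_e n"

end

theory Submission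
  imports Defs "HOL-Library.FuncSet"
begin

definition Dv :: "nat \<Rightarrow> nat set" where "Dv a = {k. k dvd a}"

lemma finite_Dv: "a > 0 \<Longrightarrow> finite (Dv a)"
  unfolding Dv_def by (simp add: finite_divisors_nat)

lemma Tmult:
  fixes n :: nat
  assumes n: "n > 0"
  defines "P \<equiv> prime_factors n"
  shows "T_e n > 0 \<and> (\<forall>q. prime q \<longrightarrow> multiplicity q (T_e n) =
     (if q \<in> P then (\<Sum>(Dv (multiplicity q n))) * (\<Prod>r\<in>P-{q}. card (Dv (multiplicity r n))) else 0))"
proof -
  define a where "a = (\<lambda>p. multiplicity p n)"
  define F where "F = PiE P (\<lambda>p. Dv (a p))"
  define g where "g = (\<lambda>f. \<Prod>p\<in>P. p ^ f p)"
  have finP: "finite P" unfolding P_def by simp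
  have primeP: "\<And>p. p \<in> P \<Longrightarrow> prime p" unfolding P_def by auto
  have apos: "\<And>p. p \<in> P \<Longrightarrow> a p > 0" unfolding P_def a_def
    using n prime_factors_multiplicity by auto
  have finB: "\<And>p. p \<in> P \<Longrightarrow> finite (Dv (a p))" using apos finite_Dv by auto
  have finF: "finite F" unfolding F_def using finP finB by (simp add: finite_PiE)
  have gmult: "\<And>f q. prime q \<Longrightarrow> multiplicity q (g f) = (if q \<in> P then f q else 0)"
    unfolding g_def using finP primeP by (simp add: multiplicity_prod_prime_powers)
  have gpos: "\<And>f. g f > 0" unfolding g_def using primeP
    by (simp add: prime_gt_0_nat prod_pos)
  have inj: "inj_on g F"
  proof (rule inj_onI)
    fix f1 f2 assume f: "f1 \<in> F" "f2 \<in> F" "g f1 = g f2"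
    show "f1 = f2"
    proof (rule PiE_ext)
      show "f1 \<in> PiE P (\<lambda>p. Dv (a p))" "f2 \<in> PiE P (\<lambda>p. Dv (a p))" using f F_def by auto
      fix i assume "i \<in> P"
      then show "f1 i = f2 i" using gmult[of i f1] gmult[of i f2] f(3) primeP by auto
    qed
  qed
  have img: "e_divisors n = g ` F"
  proof
    show "g ` F \<subseteq> e_divisors n"
    proof
      fix d assume "d \<in> g ` F"
      then obtain f where f: "f \<in> F" and d: "d = g f" by auto
      have fP: "\<And>p. p \<in> P \<Longrightarrow> f p dvd a p" using f unfolding F_def Dv_def by auto
      have "d dvd n"
      proof -
        have "n = (\<Prod>p\<in>P. p ^ a p)" unfolding P_def a_def using prime_factorization_nat n by blast
        moreover have "g f dvd (\<Prod>p\<in>P. p ^ a p)" unfolding g_def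
          by (rule prod_dvd_prod) (use fP apos in \<open>auto intro: le_imp_power_dvd dvd_imp_le\<close>)
        ultimately show ?thesis using d by simp
      qed
      moreover have "\<forall>p\<in>prime_factors n. multiplicity p d dvd multiplicity p n"
        using fP gmult primeP d unfolding P_def a_def by auto
      ultimately show "d \<in> e_divisors n" unfolding e_divisors_def by auto
    qed
  next
    show "e_divisors n \<subseteq> g ` F"
    proof
      fix d assume "d \<in> e_divisors n"
      hence dd: "d dvd n" and dm: "\<forall>p\<in>P. multiplicity p d dvd a p"
        unfolding e_divisors_def P_def a_def by auto
      have dpos: "d > 0" using dd n by (metis dvd_0_left_iff gr0I not_less0)
      define f where "f = restrict (\<lambda>p. multiplicity p d) P"
      have "f \<in> F" unfolding F_def f_def Dv_def using dm by auto
      moreover have "d = g f"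
      proof (rule multiplicity_eq_nat)
        show "d > 0" by fact
        show "g f > 0" by (rule gpos)
        fix q :: nat assume q: "prime q"
        show "multiplicity q d = multiplicity q (g f)"
        proof (cases "q \<in> P")
          case True then show ?thesis using gmult q f_def by auto
        next
          case False
          hence "multiplicity q n = 0" using q n unfolding P_def by (simp add: prime_factors_multiplicity)
          moreover have "multiplicity q d \<le> multiplicity q n"
            using dd n q by (intro dvd_imp_multiplicity_le) auto
          ultimately show ?thesis using gmult q False by auto
        qed
      qed
      ultimately show "d \<in> g ` F" by auto
    qed
  qed
  have T: "T_e n = prod g F" unfolding T_e_def img using inj by (simp add: prod.reindex)
  have Tpos: "T_e n > 0" unfolding T using gpos by (simp add: prod_pos)
  have sumF: "\<And>q. q \<in> P \<Longrightarrow> (\<Sum>f\<in>F. f q) = (\<Sum>(Dv (a q))) * (\<Prod>r\<in>P-{q}. card (Dv (a r)))"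
  proof -
    fix q assume q: "q \<in> P"
    have "(\<Sum>f\<in>F. f q) = (\<Sum>f\<in>F. \<Prod>x\<in>P. (if x = q then f x else 1))"
      using q finP by (intro sum.cong refl) (simp add: prod.delta)
    also have "\<dots> = (\<Prod>x\<in>P. \<Sum>y\<in>Dv (a x). (if x = q then y else 1))"
      unfolding F_def using prod_sum_PiE[OF finP finB, where f="\<lambda>x y. if x = q then y else 1"] by simp
    also have "\<dots> = (\<Sum>y\<in>Dv (a q). y) * (\<Prod>x\<in>P-{q}. \<Sum>y\<in>Dv (a x). (if x = q then y else 1))"
      using q finP by (simp add: prod.remove)
    also have "(\<Prod>x\<in>P-{q}. \<Sum>y\<in>Dv (a x). (if x = q then y else 1)) = (\<Prod>r\<in>P-{q}. card (Dv (a r)))"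
      by (intro prod.cong refl) auto
    finally show "(\<Sum>f\<in>F. f q) = (\<Sum>(Dv (a q))) * (\<Prod>r\<in>P-{q}. card (Dv (a r)))" by simp
  qed
  have "\<forall>q. prime q \<longrightarrow> multiplicity q (T_e n) =
     (if q \<in> P then (\<Sum>(Dv (a q))) * (\<Prod>r\<in>P-{q}. card (Dv (a r))) else 0)"
  proof (intro allI impI)
    fix q :: nat assume q: "prime q"
    have "multiplicity q (T_e n) = (\<Sum>f\<in>F. multiplicity q (g f))"
      unfolding T using q gpos finF
      by (intro prime_elem_multiplicity_prod_distrib) (auto, metis less_irrefl)
    also have "\<dots> = (\<Sum>f\<in>F. if q \<in> P then f q else 0)" using gmult q by simp
    finally show "multiplicity q (T_e n) =
     (if q \<in> P then (\<Sum>(Dv (a q))) * (\<Prod>r\<in>P-{q}. card (Dv (a r))) else 0)"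
      using sumF by auto
  qed
  then show ?thesis using Tpos unfolding a_def by simp
qed

lemma Dv1[simp]: "Dv 1 = {1}" unfolding Dv_def by auto
lemma Dv1'[simp]: "Dv (Suc 0) = {Suc 0}" unfolding Dv_def by auto

lemma card_Dv_ge1: "a > 0 \<Longrightarrow> 1 \<le> card (Dv a)"
  using finite_Dv[of a] by (metis One_nat_def Suc_leI card_gt_0_iff dvd_refl empty_iff mem_Collect_eq Dv_def)

lemma sum_Dv_ge: "a > 0 \<Longrightarrow> a \<le> \<Sum>(Dv a)"
  using finite_Dv[of a] by (intro member_le_sum) (auto simp: Dv_def)

lemma sum_Dv_ge2: "a \<ge> 2 \<Longrightarrow> a + 1 \<le> \<Sum>(Dv a)"
proof -
  assume a: "a \<ge> 2"
  have "\<Sum>{1,a} \<le> \<Sum>(Dv a)" using finite_Dv[of a] a by (intro sum_mono2) (auto simp: Dv_def)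
  thus ?thesis using a by simp
qed

lemma card_Dv_ge2: "a \<ge> 2 \<Longrightarrow> 2 \<le> card (Dv a)"
proof -
  assume a: "a \<ge> 2"
  have "card {1,a} \<le> card (Dv a)" using finite_Dv[of a] a by (intro card_mono) (auto simp: Dv_def)
  thus ?thesis using a by simp
qed

lemma card_Dv_2: "a \<ge> 2 \<Longrightarrow> card (Dv a) = 2 \<Longrightarrow> \<Sum>(Dv a) = a + 1"
proof -
  assume a: "a \<ge> 2" and c: "card (Dv a) = 2"
  have "{1,a} \<subseteq> Dv a" by (auto simp: Dv_def)
  moreover have "card {1,a} = card (Dv a)" using a c by simp
  ultimately have "{1,a} = Dv a" using finite_Dv[of a] a by (intro card_subset_eq) auto
  moreover have "\<Sum>{1,a} = a + 1" using a by simp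
  ultimately show ?thesis by simp
qed

lemma single_prime:
  fixes n :: nat
  assumes n1: "n > 1"
    and H: "T_e n = n ^ 2 \<or> T_e (T_e n) = n ^ 2"
  shows "\<exists>p. prime_factors n = {p}"
proof (rule ccontr)
  assume ns: "\<nexists>p. prime_factors n = {p}"
  define P where "P = prime_factors n"
  define a where "a = (\<lambda>p. multiplicity p n)"
  define c where "c = (\<lambda>p. \<Prod>r\<in>P-{p}. card (Dv (a r)))"
  define e where "e = (\<lambda>p. (\<Sum>(Dv (a p))) * c p)"
  have n: "n > 0" using n1 by simp
  have finP: "finite P" unfolding P_def by simp
  have primeP: "\<And>p. p \<in> P \<Longrightarrow> prime p" unfolding P_def by auto
  have apos: "\<And>p. p \<in> P \<Longrightarrow> a p > 0" unfolding P_def a_def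
    using n prime_factors_multiplicity by auto
  obtain p0 where "prime p0" "p0 dvd n" using n1 prime_factor_nat[of n] by auto
  hence p0: "p0 \<in> P" unfolding P_def using n by (simp add: in_prime_factors_iff)
  have other: "\<exists>y\<in>P. y \<noteq> x" if x: "x \<in> P" for x
  proof (rule ccontr)
    assume "\<not> (\<exists>y\<in>P. y \<noteq> x)"
    hence "P = {x}" using x by blast
    thus False using ns unfolding P_def by blast
  qed
  have cardge1: "1 \<le> card (Dv (a r))" if "r \<in> P" for r using apos[OF that] by (rule card_Dv_ge1)
  have c1: "1 \<le> c p" for p unfolding c_def by (rule prod_ge_1) (rule cardge1, simp)
  have c2: "\<And>p q. q \<in> P \<Longrightarrow> q \<noteq> p \<Longrightarrow> a q \<ge> 2 \<Longrightarrow> 2 \<le> c p"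
  proof -
    fix p q assume q: "q \<in> P" "q \<noteq> p" "a q \<ge> 2"
    have "c p = card (Dv (a q)) * (\<Prod>r\<in>P-{p}-{q}. card (Dv (a r)))"
      unfolding c_def using q finP by (subst prod.remove[of _ q]) auto
    moreover have "1 \<le> (\<Prod>r\<in>P-{p}-{q}. card (Dv (a r)))" by (rule prod_ge_1) (rule cardge1, simp)
    moreover have "2 \<le> card (Dv (a q))" using q card_Dv_ge2 by auto
    ultimately show "2 \<le> c p" by (metis le_trans mult_le_mono nat_mult_1_right)
  qed
  have cone: "\<And>p. (\<forall>q\<in>P-{p}. a q = 1) \<Longrightarrow> c p = 1"
    unfolding c_def by (intro prod.neutral) (auto simp: Dv1)
  have Tm: "\<And>q. q \<in> P \<Longrightarrow> multiplicity q (T_e n) = e q" and Tpos: "T_e n > 0"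
    using Tmult[OF n] primeP unfolding e_def c_def a_def P_def by auto
  have m2: "\<And>q. prime q \<Longrightarrow> multiplicity q (n^2) = 2 * a q"
    unfolding a_def using n by (simp add: prime_elem_multiplicity_power_distrib)
  have sigge: "\<And>p. p \<in> P \<Longrightarrow> a p \<le> \<Sum>(Dv (a p))" using apos sum_Dv_ge by auto
  from H show False
  proof
    assume T: "T_e n = n ^ 2"
    have eq: "e p = 2 * a p" if p: "p \<in> P" for p
    proof -
      have "e p = multiplicity p (T_e n)" using Tm[OF p] by simp
      also have "\<dots> = 2 * a p" using T m2 primeP[OF p] by simp
      finally show ?thesis .
    qed
    show False
    proof (cases "\<exists>i\<in>P. a i \<ge> 2")
      case True
      then obtain i where i: "i \<in> P" "a i \<ge> 2" by auto
      have ones: "\<And>j. j \<in> P \<Longrightarrow> j \<noteq> i \<Longrightarrow> a j = 1"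
      proof (rule ccontr)
        fix j assume j: "j \<in> P" "j \<noteq> i" "a j \<noteq> 1"
        hence aj: "a j \<ge> 2" using apos[of j] by auto
        have "2 * (a j + 1) \<le> e j" unfolding e_def using c2[OF i(1) j(2)[symmetric] i(2)] sum_Dv_ge2[OF aj]
          by (metis mult.commute mult_le_mono)
        thus False using eq[OF j(1)] by simp
      qed
      have ci: "c i = 1" using ones cone by auto
      obtain j where j: "j \<in> P" "j \<noteq> i" using other i by blast
      have cj: "c j = card (Dv (a i))"
      proof -
        have "c j = card (Dv (a i)) * (\<Prod>r\<in>P-{j}-{i}. card (Dv (a r)))"
          unfolding c_def using i j finP by (subst prod.remove[of _ i]) auto
        moreover have "(\<Prod>r\<in>P-{j}-{i}. card (Dv (a r))) = 1"
          using ones by (intro prod.neutral) (auto simp: Dv1)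
        ultimately show ?thesis by simp
      qed
      have "e j = c j" unfolding e_def using ones[OF j] by (simp add: Dv1)
      hence "card (Dv (a i)) = 2" using eq[OF j(1)] ones[OF j] cj by simp
      hence "\<Sum>(Dv (a i)) = a i + 1" using card_Dv_2 i by auto
      hence "e i = a i + 1" unfolding e_def using ci by simp
      thus False using eq[OF i(1)] i by simp
    next
      case False
      have ai: "a i = 1" if i: "i \<in> P" for i
        using apos[OF i] False i by (cases "a i") auto
      hence "e p0 = 1" unfolding e_def using cone p0 by (simp add: Dv1)
      thus False using eq[OF p0] ai[OF p0] by simp
    qed
  next
    assume T: "T_e (T_e n) = n ^ 2"
    define m where "m = T_e n"
    have epos: "e p > 0" if p: "p \<in> P" for p
    proof -
      have "0 < \<Sum>(Dv (a p))" using sigge[OF p] apos[OF p] by linarith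
      thus ?thesis unfolding e_def using c1[of p] by simp
    qed
    have Pm: "prime_factors m = P"
    proof -
      have "prime_factors m = {p. prime p \<and> 0 < multiplicity p m}"
        by (rule prime_factors_multiplicity)
      also have "\<dots> = P"
      proof (safe)
        fix p assume "prime p" "0 < multiplicity p m"
        thus "p \<in> P" using Tmult[OF n] unfolding m_def P_def by (auto split: if_splits)
      next
        fix p assume "p \<in> P" thus "prime p" using primeP by auto
        show "0 < multiplicity p m" unfolding m_def using Tm epos \<open>p \<in> P\<close> by simp
      qed
      finally show ?thesis .
    qed
    have mpos: "m > 0" unfolding m_def by (rule Tpos)
    have Tm2: "multiplicity p (T_e m) =
        (\<Sum>(Dv (e p))) * (\<Prod>r\<in>P-{p}. card (Dv (e r)))" if p: "p \<in> P" for p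
    proof -
      have "multiplicity p (T_e m) = (\<Sum>(Dv (multiplicity p m))) * (\<Prod>r\<in>P-{p}. card (Dv (multiplicity r m)))"
        using Tmult[OF mpos] Pm primeP[OF p] p by simp
      also have "(\<Prod>r\<in>P-{p}. card (Dv (multiplicity r m))) = (\<Prod>r\<in>P-{p}. card (Dv (e r)))"
        by (intro prod.cong refl) (simp add: m_def Tm)
      finally show ?thesis using Tm[OF p] m_def by simp
    qed
    have eq: "(\<Sum>(Dv (e p))) * (\<Prod>r\<in>P-{p}. card (Dv (e r))) = 2 * a p" if p: "p \<in> P" for p
      using Tm2[OF p] m2[OF primeP[OF p]] T unfolding m_def by simp
    have c'1: "1 \<le> (\<Prod>r\<in>P-{p}. card (Dv (e r)))" for p
      by (rule prod_ge_1) (rule card_Dv_ge1, simp add: epos)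
    have all1: "\<And>x. x \<in> P \<Longrightarrow> a x = 1"
    proof (rule ccontr)
      fix x assume x: "x \<in> P" "a x \<noteq> 1"
      hence ax: "a x \<ge> 2" using apos[of x] by auto
      obtain p where p: "p \<in> P" "p \<noteq> x" using other x by blast
      have "2 \<le> c p" using c2[OF x(1) p(2)[symmetric] ax] .
      hence "2 * a p \<le> e p" unfolding e_def using sigge[OF p(1)] by (metis mult.commute mult_le_mono)
      hence e2: "e p \<ge> 2" using apos[OF p(1)] by linarith
      have "e p + 1 \<le> \<Sum>(Dv (e p))" using sum_Dv_ge2[OF e2] .
      also have "\<dots> \<le> (\<Sum>(Dv (e p))) * (\<Prod>r\<in>P-{p}. card (Dv (e r)))" using c'1[of p] by simp
      finally show False using eq[OF p(1)] \<open>2 * a p \<le> e p\<close> by linarith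
    qed
    have "\<And>p. p \<in> P \<Longrightarrow> e p = 1" unfolding e_def using cone all1 by (simp add: Dv1)
    hence "(\<Prod>r\<in>P-{p0}. card (Dv (e r))) = 1" by (intro prod.neutral) (auto simp: Dv1)
    thus False using eq[OF p0] all1[OF p0] \<open>\<And>p. p \<in> P \<Longrightarrow> e p = 1\<close>[OF p0] by (simp add: Dv1)
  qed
qed


theorem mainTheorem2:
  fixes n :: nat
  assumes "n > 1"
    and "T_e n = n ^ 2 \<or> T_e (T_e n) = n ^ 2"
  shows "e_harmonic2 n \<longleftrightarrow> S_e n dvd d_e n"
proof -
  obtain p where P: "prime_factors n = {p}" using single_prime[OF assms] by blast
  have n: "n > 0" using assms(1) by simp
  define a where "a = multiplicity p n"
  have pp: "prime p" using P by (metis in_prime_factors_imp_prime insertI1)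
  have apos: "a > 0" unfolding a_def using P n prime_factors_multiplicity[of n] by auto
  have nE: "n = p ^ a" unfolding a_def using prime_factorization_nat[OF n] P by simp
  have D: "d_e n = card (Dv a)" unfolding d_e_def P Dv_def a_def by simp
  have S: "S_e n = (\<Sum>k\<in>Dv a. p ^ (a - k))" unfolding S_e_def P Dv_def a_def by simp
  have fin: "finite (Dv a)" using finite_Dv apos by simp
  have aD: "a \<in> Dv a" by (simp add: Dv_def)
  have S2: "S_e n = 1 + (\<Sum>k\<in>Dv a - {a}. p ^ (a - k))"
    unfolding S using fin aD by (simp add: sum.remove)
  have "p dvd (\<Sum>k\<in>Dv a - {a}. p ^ (a - k))"
  proof (rule dvd_sum)
    fix k assume k: "k \<in> Dv a - {a}"
    hence "k \<le> a" using apos by (auto simp: Dv_def intro: dvd_imp_le)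
    hence "a - k > 0" using k by auto
    thus "p dvd p ^ (a - k)" by (simp add: dvd_power)
  qed
  hence "\<not> p dvd S_e n" using pp S2 by (metis dvd_add_right_iff not_prime_1 nat_dvd_1_iff_1 dvd_add_left_iff)
  hence "coprime (S_e n) p" using pp by (simp add: prime_imp_coprime coprime_commute)
  hence cop: "coprime (S_e n) n" unfolding nE by simp
  show ?thesis unfolding e_harmonic2_def using cop by (simp add: coprime_dvd_mult_right_iff coprime_dvd_mult_left_iff)
qed

end
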